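(* Consider the streaming version of the Boolean Hidden Hypermatching problem $BHH_n^t$ (with $n=kt$ for an integer $k$), in which the binary vector $x\in\{0,1\}^n$ arrives as a stream, followed by the hyperedges of $M$ together with the Boolean vector $w$. There exists a streaming interactive proof for $BHH_n^t$ with communication and verifier space cost $O(t\log n\,\log\log n)$ bits.
   Context: $BHH_n^t$: the input is $x\in\{0,1\}^n$, a perfect $t$-uniform hypermatching $M=\{M_1,\dots,M_{n/t}\}$ on $[n]$ with $M_r=\{M_{r,1},\dots,M_{r,t}\}$, and $w\in\{0,1\}^{n/t}$. Let $Mx\in\{0,1\}^{n/t}$ have $r$-th coordinate $\bigoplus_{i=1}^t x_{M_{r,i}}$. It is promised that either $Mx\oplus w=0^{n/t}$ (YES) or $Mx\oplus w=1^{n/t}$ (NO); the goal is to decide which. A streaming interactive proof: a randomized verifier reads the stream once; afterwards it exchanges messages with a prover and outputs an answer or rejects; an honest prover makes it output the correct answer with probability at least $2/3$, and against any prover it outputs the correct answer or rejects with probability at least $2/3$. *)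

theory Defs
  imports "HOL-Probability.Probability"
begin

text \<open>Stream tokens for the streaming version of BHH: first the bits of x (in order
  x_0, ..., x_{n-1}), then the hyperedges of M, each given as the list of its t vertices
  (vertices are 0..n-1) together with the corresponding bit of w.\<close>
datatype tok = XBit bool | Edge "nat list" bool

text \<open>Each transition may use fresh randomness (hence returns a distribution); random bits that
  are to be remembered must be stored in the state and thus count towards the space.
  After the stream, there are v_rounds rounds; in round i the verifier sends a message
  (of at most v_len i bits) and the prover answers with a message, of which the verifier
  reads (at most) p_len i bits. Finally the verifier outputs Some answer, or None (reject).\<close>
record verifier =
  v_init :: "bool list"
  v_step :: "tok \<Rightarrow> bool list \<Rightarrow> bool list pmf"
  v_rounds :: nat
  v_msg :: "nat \<Rightarrow> bool list \<Rightarrow> (bool list \<times> bool list) pmf"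
  v_recv :: "nat \<Rightarrow> bool list \<Rightarrow> bool list \<Rightarrow> bool list pmf"
  v_out :: "bool list \<Rightarrow> bool option pmf"
  v_len :: "nat \<Rightarrow> nat"
  p_len :: "nat \<Rightarrow> nat"

text \<open>A (deterministic, w.l.o.g.) prover maps the list of verifier messages received so far
  to its next message.\<close>
type_synonym prover = "bool list list \<Rightarrow> bool list"

fun run_stream :: "verifier \<Rightarrow> tok list \<Rightarrow> bool list \<Rightarrow> bool list pmf" where
  "run_stream V [] \<sigma> = return_pmf \<sigma>"
| "run_stream V (a # as) \<sigma> = bind_pmf (v_step V a \<sigma>) (run_stream V as)"

fun run_rounds :: "verifier \<Rightarrow> prover \<Rightarrow> nat \<Rightarrow> bool list list \<Rightarrow> bool list \<Rightarrow> bool list pmf" where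
  "run_rounds V P 0 ms \<sigma> = return_pmf \<sigma>"
| "run_rounds V P (Suc r) ms \<sigma> =
     bind_pmf (v_msg V (length ms) \<sigma>) (\<lambda>(m, \<sigma>').
       bind_pmf (v_recv V (length ms) \<sigma>' (take (p_len V (length ms)) (P (ms @ [m]))))
         (run_rounds V P r (ms @ [m])))"

definition outcome :: "verifier \<Rightarrow> prover \<Rightarrow> tok list \<Rightarrow> bool option pmf" where
  "outcome V P xs =
     bind_pmf (run_stream V xs (v_init V))
       (\<lambda>\<sigma>. bind_pmf (run_rounds V P (v_rounds V) [] \<sigma>) (v_out V))"

definition space_bounded :: "verifier \<Rightarrow> nat \<Rightarrow> bool" where
  "space_bounded V s \<longleftrightarrow>
     length (v_init V) \<le> s
   \<and> (\<forall>a \<sigma>. \<forall>\<sigma>' \<in> set_pmf (v_step V a \<sigma>). length \<sigma>' \<le> s)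
   \<and> (\<forall>i \<sigma>. \<forall>(m, \<sigma>') \<in> set_pmf (v_msg V i \<sigma>). length \<sigma>' \<le> s \<and> length m \<le> v_len V i)
   \<and> (\<forall>i \<sigma> a. \<forall>\<sigma>' \<in> set_pmf (v_recv V i \<sigma> a). length \<sigma>' \<le> s)"

definition comm :: "verifier \<Rightarrow> nat" where
  "comm V = (\<Sum>i<v_rounds V. v_len V i + p_len V i)"

definition perfect_hypermatching :: "nat \<Rightarrow> nat \<Rightarrow> nat list list \<Rightarrow> bool" where
  "perfect_hypermatching n t Ms \<longleftrightarrow>
     (\<forall>e \<in> set Ms. distinct e \<and> length e = t \<and> set e \<subseteq> {..<n})
   \<and> (\<forall>i j. i < length Ms \<and> j < length Ms \<and> i \<noteq> j \<longrightarrow> set (Ms ! i) \<inter> set (Ms ! j) = {})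
   \<and> (\<Union>e \<in> set Ms. set e) = {..<n}"

definition edge_parity :: "(nat \<Rightarrow> bool) \<Rightarrow> nat list \<Rightarrow> bool" where
  "edge_parity x e = odd (length (filter x e))"

definition bhh_yes :: "(nat \<Rightarrow> bool) \<Rightarrow> nat list list \<Rightarrow> bool list \<Rightarrow> bool" where
  "bhh_yes x Ms w \<longleftrightarrow> (\<forall>r < length Ms. edge_parity x (Ms ! r) = w ! r)"

definition bhh_no :: "(nat \<Rightarrow> bool) \<Rightarrow> nat list list \<Rightarrow> bool list \<Rightarrow> bool" where
  "bhh_no x Ms w \<longleftrightarrow> (\<forall>r < length Ms. edge_parity x (Ms ! r) \<noteq> w ! r)"

definition bhh_instance :: "nat \<Rightarrow> nat \<Rightarrow> (nat \<Rightarrow> bool) \<Rightarrow> nat list list \<Rightarrow> bool list \<Rightarrow> bool" where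
  "bhh_instance n t x Ms w \<longleftrightarrow>
     perfect_hypermatching n t Ms \<and> length w = length Ms \<and> (bhh_yes x Ms w \<or> bhh_no x Ms w)"

definition bhh_stream :: "nat \<Rightarrow> (nat \<Rightarrow> bool) \<Rightarrow> nat list list \<Rightarrow> bool list \<Rightarrow> tok list" where
  "bhh_stream n x Ms w = map (\<lambda>i. XBit (x i)) [0..<n] @ map (\<lambda>(e, b). Edge e b) (zip Ms w)"

definition sip_for_bhh :: "nat \<Rightarrow> nat \<Rightarrow> verifier \<Rightarrow> bool" where
  "sip_for_bhh n t V \<longleftrightarrow>
    (\<forall>x Ms w. bhh_instance n t x Ms w \<longrightarrow>
      (let ans = bhh_yes x Ms w; s = bhh_stream n x Ms w in
        (\<exists>P. measure_pmf.prob (outcome V P s) {Some ans} \<ge> 2/3)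
      \<and> (\<forall>P. measure_pmf.prob (outcome V P s) {Some ans, None} \<ge> 2/3)))"

end

theory Submission
  imports Defs "HOL-Computational_Algebra.Primes"
begin

lemma Suc_div_pow:
  fixes q n :: nat assumes "q > 0"
  shows "Suc n div q = n div q + (if q dvd Suc n then 1 else 0)"
  using assms by (auto simp: div_Suc mod_eq_0_iff_dvd)

lemma mult_le_self:
  fixes p m :: nat assumes "prime p" "m > 0"
  shows "multiplicity p m \<le> m"
proof -
  have "p ^ multiplicity p m dvd m" by (simp add: multiplicity_dvd)
  hence "p ^ multiplicity p m \<le> m" using assms(2) by (simp add: dvd_imp_le)
  moreover have "multiplicity p m < 2 ^ multiplicity p m" by (rule less_exp)
  moreover have "2 ^ multiplicity p m \<le> p ^ multiplicity p m"
    using prime_ge_2_nat[OF assms(1)] by (simp add: power_mono)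
  ultimately show ?thesis by linarith
qed

lemma legendre:
  fixes p :: nat assumes p: "prime p"
  shows "multiplicity p (fact n :: nat) = (\<Sum>i\<in>{1..n}. n div p^i)"
proof (induction n)
  case 0 then show ?case by simp
next
  case (Suc n)
  have p2: "p \<ge> 2" using prime_ge_2_nat[OF p] .
  have fs: "(fact (Suc n) :: nat) = Suc n * fact n" by (simp only: fact_Suc of_nat_id)
  have "multiplicity p (Suc n * (fact n :: nat)) = multiplicity p (Suc n) + multiplicity p (fact n :: nat)"
    by (rule prime_elem_multiplicity_mult_distrib) (use p in auto)
  hence "multiplicity p (fact (Suc n) :: nat) = multiplicity p (Suc n) + multiplicity p (fact n :: nat)"
    by (simp only: fs)
  also have "multiplicity p (Suc n) = card {i\<in>{1..Suc n}. p^i dvd Suc n}"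
  proof -
    have "{i\<in>{1..Suc n}. p^i dvd Suc n} = {1..multiplicity p (Suc n)}"
    proof -
      have key: "\<And>i. p^i dvd Suc n \<longleftrightarrow> i \<le> multiplicity p (Suc n)"
        using power_dvd_iff_le_multiplicity[of "Suc n" p] p prime_gt_1_nat[OF p] by simp
      show ?thesis using mult_le_self[OF p, of "Suc n"] by (auto simp: key)
    qed
    thus ?thesis by simp
  qed
  also have "card {i\<in>{1..Suc n}. p^i dvd Suc n} = (\<Sum>i\<in>{1..Suc n}. if p^i dvd Suc n then 1 else 0)"
    by (subst sum.inter_filter[symmetric]) auto
  also have "multiplicity p (fact n :: nat) = (\<Sum>i\<in>{1..Suc n}. n div p^i)"
  proof -
    have "n < p ^ Suc n"
    proof -
      have "n < 2 ^ n" by (rule less_exp)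
      also have "... \<le> p ^ n" using p2 by (simp add: power_mono)
      also have "... < p ^ Suc n" using p2 by simp
      finally show ?thesis .
    qed
    hence "n div p ^ Suc n = 0" by simp
    thus ?thesis using Suc.IH by simp
  qed
  also have "(\<Sum>i\<in>{1..Suc n}. if p^i dvd Suc n then 1 else 0) + (\<Sum>i\<in>{1..Suc n}. n div p^i)
      = (\<Sum>i\<in>{1..Suc n}. Suc n div p^i)"
    by (subst sum.distrib[symmetric], rule sum.cong, simp, subst Suc_div_pow, use p2 in auto)
  finally show ?case .
qed

lemma central_term:
  fixes q m :: nat assumes "q > 0"
  shows "2*m div q - 2 * (m div q) \<le> 1"
proof -
  have "2*m = q * (2*(m div q)) + 2*(m mod q)" using div_mult_mod_eq[of m q] by (metis add_mult_distrib2 mult.commute mult.left_commute)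
  hence "2*m div q = 2*(m div q) + (2*(m mod q)) div q" using assms by simp
  moreover have "2*(m mod q) < 2*q" using assms by simp
  hence "(2*(m mod q)) div q < 2" using less_mult_imp_div_less[of "2*(m mod q)" 2 q] by (simp add: mult.commute)
  hence "(2*(m mod q)) div q \<le> 1" by simp
  ultimately show ?thesis by simp
qed

lemma central_mult_bound:
  fixes p m :: nat assumes p: "prime p" and m0: "m > 0"
  shows "p ^ multiplicity p ((2*m) choose m) \<le> 2*m"
proof (rule ccontr)
  assume A: "\<not> ?thesis"
  define v where "v = multiplicity p ((2*m) choose m)"
  define X where "X = (\<Sum>i\<in>{1..2*m}. 2*m div p^i - 2 * (m div p^i))"
  define Y where "Y = (\<Sum>i\<in>{1..2*m}. 2*(m div p^i))"
  define Z where "Z = (\<Sum>i\<in>{1..2*m}. 2*m div p^i)"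
  define U where "U = (\<Sum>i\<in>{1..m}. m div p^i)"
  have p2: "p \<ge> 2" using prime_ge_2_nat[OF p] .
  have pos: "((2*m) choose m) > 0" by simp
  have "fact m * fact (2*m - m) * ((2*m) choose m) = (fact (2*m) :: nat)"
    by (rule binomial_fact_lemma) simp
  hence eq: "fact m * fact m * ((2*m) choose m) = (fact (2*m) :: nat)" by simp
  have "multiplicity p (fact m * fact m * ((2*m) choose m) :: nat) =
        multiplicity p (fact m :: nat) + multiplicity p (fact m :: nat) + v"
    unfolding v_def using p pos
    by (simp add: prime_elem_multiplicity_mult_distrib)
  hence "multiplicity p (fact (2*m) :: nat) = U + U + v"
    unfolding eq U_def using legendre[OF p] by simp
  hence v1: "Z = U + U + v"
    unfolding Z_def using legendre[OF p] by simp
  have h: "U = (\<Sum>i\<in>{1..2*m}. m div p^i)"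
  proof -
    have "(\<Sum>i\<in>{1..2*m}. m div p^i) = (\<Sum>i\<in>{1..m}. m div p^i) + (\<Sum>i\<in>{m<..2*m}. m div p^i)"
      by (subst sum.union_disjoint[symmetric]) (auto intro!: sum.cong)
    moreover have "(\<Sum>i\<in>{m<..2*m}. m div p^i) = 0"
    proof (rule sum.neutral, clarify)
      fix i assume "i \<in> {m<..2*m}"
      hence "m \<le> i" by simp
      hence "(2::nat)^m \<le> 2^i" by (rule power_increasing) simp
      also have "(2::nat)^i \<le> p^i" using p2 by (simp add: power_mono)
      finally have "2^m \<le> p^i" .
      moreover have "m < 2 ^ m" by (rule less_exp)
      ultimately have "m < p^i" by linarith
      thus "m div p ^ i = 0" by (rule div_less)
    qed
    ultimately show ?thesis unfolding U_def by simp
  qed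
  have le: "\<And>i. 2 * (m div p^i) \<le> 2*m div p^i"
  proof -
    fix i
    have q: "p^i > 0" using p2 by simp
    have "2 * (m div p^i) = (2 * (m div p^i) * p^i) div p^i" using q by simp
    also have "... \<le> 2*m div p^i"
      by (rule div_le_mono) (simp add: mult.assoc times_div_less_eq_dividend)
    finally show "2 * (m div p^i) \<le> 2*m div p^i" .
  qed
  have e: "X + Y = Z" unfolding X_def Y_def Z_def
    by (subst sum.distrib[symmetric]) (rule sum.cong, auto simp: le)
  have h2: "U + U = Y"
    unfolding h Y_def by (simp add: sum.distrib[symmetric] mult_2)
  have v2: "v = X" using v1 h2 e by linarith
  have vpos: "v \<ge> 1" using A v_def m0 by (cases v) auto
  have "X \<le> (\<Sum>i\<in>{1..2*m}. if i < v then 1 else 0)"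
    unfolding X_def
  proof (rule sum_mono)
    fix i assume "i \<in> {1..2*m}"
    show "2*m div p^i - 2 * (m div p^i) \<le> (if i < v then 1 else 0)"
    proof (cases "i < v")
      case True thus ?thesis using central_term[of "p^i" m] p2 by simp
    next
      case False
      hence "p ^ v \<le> p ^ i" using p2 by (simp add: power_increasing)
      hence "2*m < p^i" using A v_def by simp
      thus ?thesis by simp
    qed
  qed
  also have "... = card ({1..2*m} \<inter> {..<v})" by (simp add: sum.If_cases lessThan_def)
  also have "... \<le> card {1..<v}" by (rule card_mono) auto
  also have "... = v - 1" by simp
  finally show False using vpos v2 by simp
qed

lemma central_ge: "2 ^ m \<le> ((2*m) choose m)"
proof -
  have "(2::nat) ^ m = (\<Sum>k\<le>m. m choose k)" by (simp add: choose_row_sum)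
  also have "... \<le> (\<Sum>k\<le>m. (m choose k)^2)"
    by (rule sum_mono) (simp add: power2_eq_square le_square)
  also have "... = (2*m) choose m" by (rule choose_square_sum)
  finally show ?thesis .
qed

lemma prime_exists_pow2:
  "\<exists>p::nat. prime p \<and> 2^b < p \<and> p \<le> 2^(2*b+7)"
proof (rule ccontr)
  assume A: "\<not> ?thesis"
  define j where "j = 2*b + 6"
  define m :: nat where "m = 2^j"
  have m0: "m > 0" by (simp add: m_def)
  have binpos: "((2*m) choose m) > 0" by simp
  have pf: "prime_factors ((2*m) choose m) \<subseteq> {2..2^b}"
  proof
    fix p assume p: "p \<in> prime_factors ((2*m) choose m)"
    hence pp: "prime p" and pd: "p dvd ((2*m) choose m)" by auto
    have "fact m * fact m * ((2*m) choose m) = (fact (2*m)::nat)"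
      using binomial_fact_lemma[of m "2*m"] by simp
    hence "((2*m) choose m) dvd fact (2*m)" by (metis dvd_triv_right)
    hence "p \<le> 2*m" using pd pp prime_dvd_fact_iff dvd_trans by blast
    also have "2*m = 2^(2*b+7)" by (simp add: m_def j_def power_Suc[symmetric] del: power_Suc)
    finally have "p \<le> 2^(2*b+7)" .
    hence "p \<le> 2^b" using A pp by (meson not_le)
    thus "p \<in> {2..2^b}" using prime_ge_2_nat[OF pp] by simp
  qed
  have "((2*m) choose m) = (\<Prod>p\<in>prime_factors ((2*m) choose m). p ^ multiplicity p ((2*m) choose m))"
    using prime_factorization_nat[OF binpos] .
  also have "... \<le> (\<Prod>p\<in>prime_factors ((2*m) choose m). 2*m)"
    by (rule prod_mono) (auto intro: central_mult_bound m0)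
  also have "... = (2*m) ^ card (prime_factors ((2*m) choose m))" by simp
  also have "... \<le> (2*m) ^ (2^b)"
  proof -
    have "card (prime_factors ((2*m) choose m)) \<le> card {2..(2::nat)^b}"
      by (rule card_mono[OF _ pf]) simp
    also have "... \<le> 2^b" by simp
    finally have "card (prime_factors ((2*m) choose m)) \<le> 2^b" .
    thus ?thesis by (rule power_increasing) (use m0 in auto)
  qed
  also have "... = 2 ^ ((j+1) * 2^b)" by (simp add: m_def power_mult[symmetric] power_add mult.commute)
  finally have "(2::nat) ^ m \<le> 2 ^ ((j+1) * 2^b)" using central_ge[of m] by linarith
  hence le: "m \<le> (j+1) * 2^b" by simp
  have "(j+1) * 2^b < m"
  proof -
    have "2*b + 7 < 2 ^ (b+6)"
    proof -
      have "b + 1 < 2^b * 1 + 63" using less_exp[of b] by linarith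
      hence "2*b+7 < 64 * 2^b" using less_exp[of b] by linarith
      thus ?thesis by (simp add: power_add)
    qed
    hence "(2*b+7) * 2^b < 2^(b+6) * 2^b" by simp
    also have "... = 2^j" by (simp add: j_def power_add[symmetric])
    finally have X: "(2*b+7) * 2^b < 2^j" .
    have "j+1 = 2*b+7" by (simp add: j_def)
    thus ?thesis using X by (simp only: m_def)
  qed
  thus False using le by simp
qed

fun chi :: "nat \<Rightarrow> nat list \<Rightarrow> int" where
  "chi i [] = 1"
| "chi i (r # rs) = (if odd i then int r else 1 - int r) * chi (i div 2) rs"

definition fold1 :: "nat \<Rightarrow> (nat \<Rightarrow> int) \<Rightarrow> nat \<Rightarrow> int" where
  "fold1 r f = (\<lambda>j. (1 - int r) * f (2*j) + int r * f (2*j+1))"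

fun foldall :: "nat list \<Rightarrow> (nat \<Rightarrow> int) \<Rightarrow> nat \<Rightarrow> int" where
  "foldall [] f = f"
| "foldall (r # rs) f = foldall rs (fold1 r f)"

definition SS :: "nat \<Rightarrow> (nat \<Rightarrow> int) \<Rightarrow> (nat \<Rightarrow> int) \<Rightarrow> int" where
  "SS k f g = (\<Sum>j<2^k. f j * g j)"

definition coefs :: "nat \<Rightarrow> (nat \<Rightarrow> int) \<Rightarrow> (nat \<Rightarrow> int) \<Rightarrow> int \<times> int \<times> int" where
  "coefs k f g = ((\<Sum>j<2^k. f (2*j) * g (2*j)),
                  (\<Sum>j<2^k. f (2*j) * (g (2*j+1) - g (2*j)) + g (2*j) * (f (2*j+1) - f (2*j))),
                  (\<Sum>j<2^k. (f (2*j+1) - f (2*j)) * (g (2*j+1) - g (2*j))))"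

definition ev :: "int \<times> int \<times> int \<Rightarrow> int \<Rightarrow> int" where
  "ev c r = fst c + fst (snd c) * r + snd (snd c) * r^2"

definition s01 :: "int \<times> int \<times> int \<Rightarrow> int" where
  "s01 c = ev c 0 + ev c 1"

lemma sum_even_odd:
  fixes h :: "nat \<Rightarrow> 'a::comm_monoid_add"
  shows "(\<Sum>i<2*m. h i) = (\<Sum>j<m. h (2*j) + h (2*j+1))"
  by (induction m) (simp_all add: add.assoc)

lemma sum_pow2_Suc:
  fixes h :: "nat \<Rightarrow> 'a::comm_monoid_add"
  shows "(\<Sum>i<2^Suc k. h i) = (\<Sum>j<2^k. h (2*j) + h (2*j+1))"
  using sum_even_odd[of h "2^k"] by simp

lemma foldall_chi: "foldall rs f 0 = (\<Sum>i<2^length rs. f i * chi i rs)"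
proof (induction rs arbitrary: f)
  case Nil then show ?case by simp
next
  case (Cons r rs)
  have "foldall (r # rs) f 0 = (\<Sum>j<2^length rs. fold1 r f j * chi j rs)"
    using Cons.IH by simp
  also have "... = (\<Sum>j<2^length rs. f (2*j) * chi (2*j) (r#rs) + f (2*j+1) * chi (2*j+1) (r#rs))"
    by (rule sum.cong) (simp_all add: fold1_def algebra_simps)
  also have "... = (\<Sum>i<2^length (r#rs). f i * chi i (r#rs))"
    by (simp only: sum_pow2_Suc length_Cons)
  finally show ?case .
qed

lemma foldall_append: "foldall (xs @ [r]) f = fold1 r (foldall xs f)"
  by (induction xs arbitrary: f) simp_all

lemma s01_coefs: "s01 (coefs k f g) = SS (Suc k) f g"
proof -
  have "s01 (coefs k f g) = (\<Sum>j<2^k. f (2*j) * g (2*j) + f (2*j+1) * g (2*j+1))"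
    unfolding s01_def ev_def coefs_def
    by (simp add: sum.distrib[symmetric] algebra_simps sum_subtractf)
  also have "... = SS (Suc k) f g" unfolding SS_def by (simp only: sum_pow2_Suc)
  finally show ?thesis .
qed

lemma ev_coefs: "ev (coefs k f g) (int r) = SS k (fold1 r f) (fold1 r g)"
  unfolding ev_def coefs_def SS_def fold1_def
  by (simp add: sum_distrib_left sum.distrib[symmetric] algebra_simps power2_eq_square)

definition polyeq :: "nat \<Rightarrow> int \<times> int \<times> int \<Rightarrow> int \<times> int \<times> int \<Rightarrow> bool" where
  "polyeq p c d \<longleftrightarrow> (\<forall>r. ev c r mod int p = ev d r mod int p)"

lemma not_dvd_diff:
  fixes a b p :: nat assumes "a < p" "b < p" "a \<noteq> b"
  shows "\<not> int p dvd (int a - int b)"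
proof
  assume "int p dvd (int a - int b)"
  moreover have "int a - int b \<noteq> 0" using assms by simp
  ultimately have "\<bar>int p\<bar> \<le> \<bar>int a - int b\<bar>" by (rule dvd_imp_le_int[rotated])
  thus False using assms by linarith
qed

lemma root_three:
  fixes p a b x :: nat
  assumes p: "prime p" and abx: "a < p" "b < p" "x < p" "a \<noteq> b" "a \<noteq> x" "b \<noteq> x"
    and ra: "ev c (int a) mod int p = ev d (int a) mod int p"
    and rb: "ev c (int b) mod int p = ev d (int b) mod int p"
    and rx: "ev c (int x) mod int p = ev d (int x) mod int p"
  shows "polyeq p c d"
proof -
  obtain c0 c1 c2 where c: "c = (c0, c1, c2)" by (cases c) auto
  obtain d0 d1 d2 where d: "d = (d0, d1, d2)" by (cases d) auto
  define e0 where "e0 = c0 - d0"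
  define e1 where "e1 = c1 - d1"
  define e2 where "e2 = c2 - d2"
  define P where "P = int p"
  have P: "prime P" using p by (simp add: P_def)
  have E: "\<And>r. ev c r - ev d r = e0 + e1 * r + e2 * r^2"
    by (simp add: c d ev_def e0_def e1_def e2_def algebra_simps)
  have dv: "\<And>r. ev c r mod P = ev d r mod P \<longleftrightarrow> P dvd (e0 + e1 * r + e2 * r^2)"
    by (simp add: E[symmetric] mod_eq_dvd_iff)
  have Da: "P dvd e0 + e1 * a + e2 * a^2" using ra dv P_def by simp
  have Db: "P dvd e0 + e1 * b + e2 * b^2" using rb dv P_def by simp
  have Dx: "P dvd e0 + e1 * x + e2 * x^2" using rx dv P_def by simp
  have "P dvd (e0 + e1 * a + e2 * a^2) - (e0 + e1 * b + e2 * b^2)" using Da Db by (rule dvd_diff)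
  moreover have "(e0 + e1 * a + e2 * a^2) - (e0 + e1 * b + e2 * b^2) = (int a - int b) * (e1 + e2 * (int a + int b))"
    by (simp add: algebra_simps power2_eq_square)
  ultimately have "P dvd (int a - int b) * (e1 + e2 * (int a + int b))" by simp
  hence D1: "P dvd e1 + e2 * (int a + int b)"
    using P not_dvd_diff[of a p b] abx by (simp add: prime_dvd_mult_iff P_def)
  have "P dvd (e0 + e1 * a + e2 * a^2) - (e0 + e1 * x + e2 * x^2)" using Da Dx by (rule dvd_diff)
  moreover have "(e0 + e1 * a + e2 * a^2) - (e0 + e1 * x + e2 * x^2) = (int a - int x) * (e1 + e2 * (int a + int x))"
    by (simp add: algebra_simps power2_eq_square)
  ultimately have "P dvd (int a - int x) * (e1 + e2 * (int a + int x))" by simp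
  hence D2: "P dvd e1 + e2 * (int a + int x)"
    using P not_dvd_diff[of a p x] abx by (simp add: prime_dvd_mult_iff P_def)
  have "P dvd (e1 + e2 * (int a + int b)) - (e1 + e2 * (int a + int x))" using D1 D2 by (rule dvd_diff)
  moreover have "(e1 + e2 * (int a + int b)) - (e1 + e2 * (int a + int x)) = (int b - int x) * e2"
    by (simp add: algebra_simps)
  ultimately have "P dvd (int b - int x) * e2" by simp
  hence D3: "P dvd e2"
    using P not_dvd_diff[of b p x] abx by (simp add: prime_dvd_mult_iff P_def)
  have D4: "P dvd e1"
  proof -
    have "P dvd e2 * (int a + int b)" using D3 by simp
    thus ?thesis using D1 by (metis dvd_add_left_iff add.commute)
  qed
  have D5: "P dvd e0"
  proof -
    have "P dvd e1 * a + e2 * a^2" using D3 D4 by simp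
    thus ?thesis using Da by (metis dvd_add_left_iff add.assoc add.commute)
  qed
  show ?thesis unfolding polyeq_def
  proof
    fix r
    have "P dvd e0 + e1 * r + e2 * r^2" using D3 D4 D5 by simp
    thus "ev c r mod int p = ev d r mod int p" using dv P_def by simp
  qed
qed

lemma root_card:
  fixes p :: nat
  assumes p: "prime p" and np: "\<not> polyeq p c d"
  shows "card {a\<in>{..<p}. ev c (int a) mod int p = ev d (int a) mod int p} \<le> 2"
proof (rule ccontr)
  define S where "S = {a\<in>{..<p}. ev c (int a) mod int p = ev d (int a) mod int p}"
  assume "\<not> card {a\<in>{..<p}. ev c (int a) mod int p = ev d (int a) mod int p} \<le> 2"
  hence cS: "card S > 2" by (simp add: S_def)
  have fS: "finite S" by (simp add: S_def)
  have "S \<noteq> {}" using cS by (metis card.empty not_less_zero)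
  then obtain a where a: "a \<in> S" by blast
  have c1: "card (S - {a}) > 1" using cS a fS by simp
  have "S - {a} \<noteq> {}" using c1 by (metis card.empty not_one_less_zero)
  then obtain b where b: "b \<in> S - {a}" by blast
  have c2: "card (S - {a} - {b}) > 0" using c1 b fS by simp
  have "S - {a} - {b} \<noteq> {}" using c2 by (metis card.empty less_irrefl)
  then obtain x where x: "x \<in> S - {a} - {b}" by blast
  have "polyeq p c d"
    by (rule root_three[OF p, of a b x]) (use a b x in \<open>auto simp: S_def\<close>)
  thus False using np by simp
qed

definition lists_of :: "nat \<Rightarrow> nat \<Rightarrow> nat list set" where
  "lists_of p k = {rs. set rs \<subseteq> {..<p} \<and> length rs = k}"

lemma card_lists_of: "card (lists_of p k) = p ^ k"
  unfolding lists_of_def using card_lists_length_eq[of "{..<p}" k] by simp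

lemma finite_lists_of: "finite (lists_of p k)"
  unfolding lists_of_def by (rule finite_lists_length_eq) simp

definition badset :: "nat \<Rightarrow> nat \<Rightarrow> (nat list \<Rightarrow> int \<times> int \<times> int) \<Rightarrow> (nat list \<Rightarrow> int \<times> int \<times> int) \<Rightarrow> nat list set" where
  "badset p k A B = {rs \<in> lists_of p k. \<exists>i<k. \<not> polyeq p (A (take i rs)) (B (take i rs))
      \<and> ev (A (take i rs)) (int (rs!i)) mod int p = ev (B (take i rs)) (int (rs!i)) mod int p}"

lemma badset_card:
  assumes p: "prime p"
  shows "card (badset p k A B) * p \<le> 2 * k * p^k"
proof (induction k arbitrary: A B)
  case 0
  have "badset p 0 A B = {}" by (auto simp: badset_def)
  thus ?case by simp
next
  case (Suc k)
  define R0 where "R0 = {a\<in>{..<p}. \<not> polyeq p (A []) (B []) \<and> ev (A []) (int a) mod int p = ev (B []) (int a) mod int p}"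
  define Bd where "Bd = (\<lambda>a. badset p k (\<lambda>l. A (a # l)) (\<lambda>l. B (a # l)))"
  have R0c: "card R0 \<le> 2"
  proof (cases "polyeq p (A []) (B [])")
    case True thus ?thesis by (simp add: R0_def)
  next
    case False
    hence "R0 = {a\<in>{..<p}. ev (A []) (int a) mod int p = ev (B []) (int a) mod int p}"
      by (simp add: R0_def)
    thus ?thesis using root_card[OF p False] by simp
  qed
  have sub: "badset p (Suc k) A B \<subseteq> (\<lambda>(a, l). a # l) ` (R0 \<times> lists_of p k) \<union> (\<Union>a\<in>{..<p}. (#) a ` Bd a)"
  proof
    fix rs assume rs: "rs \<in> badset p (Suc k) A B"
    then obtain a l where rsal: "rs = a # l" unfolding badset_def lists_of_def by (cases rs) auto
    have al: "a < p" "l \<in> lists_of p k" using rs rsal by (auto simp: badset_def lists_of_def)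
    from rs obtain i where i: "i < Suc k" "\<not> polyeq p (A (take i rs)) (B (take i rs))"
      "ev (A (take i rs)) (int (rs!i)) mod int p = ev (B (take i rs)) (int (rs!i)) mod int p"
      unfolding badset_def by blast
    show "rs \<in> (\<lambda>(a, l). a # l) ` (R0 \<times> lists_of p k) \<union> (\<Union>a\<in>{..<p}. (#) a ` Bd a)"
    proof (cases i)
      case 0
      hence "a \<in> R0" using i al rsal by (simp add: R0_def)
      hence "rs \<in> (\<lambda>(a, l). a # l) ` (R0 \<times> lists_of p k)" using al rsal by force
      thus ?thesis by blast
    next
      case (Suc j)
      have "l \<in> Bd a" unfolding Bd_def badset_def using al i rsal Suc by auto
      thus ?thesis using al rsal by blast
    qed
  qed
  have fin: "finite ((\<lambda>(a, l). a # l) ` (R0 \<times> lists_of p k) \<union> (\<Union>a\<in>{..<p}. (#) a ` Bd a))"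
    by (auto simp: finite_lists_of R0_def Bd_def badset_def)
  have h0: "card (badset p (Suc k) A B) \<le> card ((\<lambda>(a, l). a # l) ` (R0 \<times> lists_of p k) \<union> (\<Union>a\<in>{..<p}. (#) a ` Bd a))"
    by (rule card_mono[OF fin sub])
  also have "... \<le> card ((\<lambda>(a, l). a # l) ` (R0 \<times> lists_of p k)) + card (\<Union>a\<in>{..<p}. (#) a ` Bd a)"
    by (rule card_Un_le)
  finally have h0': "card (badset p (Suc k) A B) \<le> card ((\<lambda>(a, l). a # l) ` (R0 \<times> lists_of p k)) + card (\<Union>a\<in>{..<p}. (#) a ` Bd a)" .
  have "card ((\<lambda>(a, l). a # l) ` (R0 \<times> lists_of p k)) \<le> card (R0 \<times> lists_of p k)"
    by (rule card_image_le) (auto simp: finite_lists_of R0_def)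
  also have "card (R0 \<times> lists_of p k) = card R0 * p^k" by (simp add: card_cartesian_product card_lists_of)
  finally have h1: "card ((\<lambda>(a, l). a # l) ` (R0 \<times> lists_of p k)) \<le> card R0 * p^k" .
  have "card (\<Union>a\<in>{..<p}. (#) a ` Bd a) \<le> (\<Sum>a<p. card ((#) a ` Bd a))"
    by (rule card_UN_le) simp
  also have "(\<Sum>a<p. card ((#) a ` Bd a)) = (\<Sum>a<p. card (Bd a))"
    by (rule sum.cong) (auto intro: card_image)
  finally have h2: "card (\<Union>a\<in>{..<p}. (#) a ` Bd a) \<le> (\<Sum>a<p. card (Bd a))" .
  have c: "card (badset p (Suc k) A B) \<le> card R0 * p^k + (\<Sum>a<p. card (Bd a))"
    using h0' h1 h2 by linarith
  have "card (badset p (Suc k) A B) * p \<le> (card R0 * p^k + (\<Sum>a<p. card (Bd a))) * p"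
    using c by simp
  also have "... = card R0 * p^k * p + (\<Sum>a<p. card (Bd a) * p)"
    by (simp add: algebra_simps sum_distrib_left)
  also have "... \<le> 2 * p^k * p + (\<Sum>a<p. 2 * k * p^k)"
    using R0c Suc.IH unfolding Bd_def by (intro add_mono sum_mono) auto
  also have "... = 2 * Suc k * p ^ Suc k" by (simp add: algebra_simps)
  finally show ?case .
qed

definition bits :: "nat \<Rightarrow> nat \<Rightarrow> bool list" where
  "bits W v = map (bit v) [0..<W]"

definition hs :: "bool list \<Rightarrow> nat" where
  "hs bs = horner_sum of_bool 2 bs"

lemma length_bits[simp]: "length (bits W v) = W"
  by (simp add: bits_def)

lemma hs_bits: "v < 2^W \<Longrightarrow> hs (bits W v) = v"
  unfolding hs_def bits_def by (simp add: horner_sum_bit_eq_take_bit take_bit_nat_eq_self)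

lemma take_drop_concat:
  assumes "\<forall>x\<in>set xs. length (f x) = W" "i < length xs"
  shows "take W (drop (i*W) (concat (map f xs))) = f (xs!i)"
  using assms
proof (induction xs arbitrary: i)
  case Nil then show ?case by simp
next
  case (Cons x xs)
  show ?case
  proof (cases i)
    case 0 then show ?thesis using Cons.prems by simp
  next
    case (Suc j)
    have "drop (i*W) (concat (map f (x#xs))) = drop (j*W) (concat (map f xs))"
      using Cons.prems Suc by (simp add: add.commute)
    thus ?thesis using Cons Suc by simp
  qed
qed

lemma rs_decode:
  assumes "\<forall>r\<in>set rs. r < 2^W" "length pre = K"
  shows "map (\<lambda>i. hs (take W (drop (K + i*W) (pre @ concat (map (bits W) rs))))) [0..<length rs] = rs"
proof (rule nth_equalityI)
  fix i assume "i < length (map (\<lambda>i. hs (take W (drop (K + i*W) (pre @ concat (map (bits W) rs))))) [0..<length rs])"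
  hence i: "i < length rs" by simp
  have d: "drop (K + i*W) (pre @ concat (map (bits W) rs)) = drop (i*W) (concat (map (bits W) rs))"
    using assms(2) by simp
  have "map (\<lambda>i. hs (take W (drop (K + i*W) (pre @ concat (map (bits W) rs))))) [0..<length rs] ! i
      = hs (take W (drop (K + i*W) (pre @ concat (map (bits W) rs))))" using i by simp
  also have "... = hs (take W (drop (i*W) (concat (map (bits W) rs))))" by (simp only: d)
  also have "... = rs ! i"
    using i take_drop_concat[of rs "bits W" W i] assms(1) by (simp add: hs_bits)
  finally show "map (\<lambda>i. hs (take W (drop (K + i*W) (pre @ concat (map (bits W) rs))))) [0..<length rs] ! i = rs ! i" .
qed simp

datatype ast = AS (cnt: nat) (rsv: "nat list") (Fv: nat) (Gv: nat) (wbv: bool) (seenv: bool)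
  (Hv: nat) (clv: nat) (okv: bool)

locale proto =
  fixes n p ell W1 W2 :: nat
begin

definition enc :: "ast \<Rightarrow> bool list" where
  "enc st = (True # bits W1 (cnt st) @ bits W2 (Fv st) @ bits W2 (Gv st) @ bits W2 (Hv st)
     @ bits W2 (clv st) @ [wbv st, seenv st, okv st]) @ concat (map (bits W2) (rsv st))"

definition dec :: "bool list \<Rightarrow> ast" where
  "dec \<sigma> = AS (hs (take W1 (drop 1 \<sigma>)))
     (map (\<lambda>i. hs (take W2 (drop ((4 + W1 + 4*W2) + i*W2) \<sigma>))) [0..<ell])
     (hs (take W2 (drop (1+W1) \<sigma>))) (hs (take W2 (drop (1+W1+W2) \<sigma>)))
     (\<sigma> ! (1+W1+4*W2)) (\<sigma> ! (2+W1+4*W2))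
     (hs (take W2 (drop (1+W1+2*W2) \<sigma>))) (hs (take W2 (drop (1+W1+3*W2) \<sigma>)))
     (\<sigma> ! (3+W1+4*W2))"

definition valid :: "ast \<Rightarrow> bool" where
  "valid st \<longleftrightarrow> cnt st \<le> n \<and> Fv st < p \<and> Gv st < p \<and> Hv st < p \<and> clv st < p
     \<and> length (rsv st) = ell \<and> (\<forall>r\<in>set (rsv st). r < p)"

fun stepA :: "tok \<Rightarrow> ast \<Rightarrow> ast" where
  "stepA (XBit b) (AS c rs F G wb sn H cl ok) =
     (if c < n then AS (Suc c) rs (if b then nat ((int F + chi c rs) mod int p) else F) G wb sn H cl ok
      else AS c rs F G wb sn H cl ok)"
| "stepA (Edge e b) (AS c rs F G wb sn H cl ok) =
     (if sn then AS c rs F G wb sn H cl ok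
      else AS c rs F (nat ((\<Sum>i\<leftarrow>e. chi i rs) mod int p)) b True H cl ok)"

definition dco :: "bool list \<Rightarrow> int \<times> int \<times> int" where
  "dco a = (int (hs (take W2 a)) mod int p, int (hs (take W2 (drop W2 a))) mod int p,
            int (hs (take W2 (drop (2*W2) a))) mod int p)"

fun recvA :: "nat \<Rightarrow> bool list \<Rightarrow> ast \<Rightarrow> ast" where
  "recvA i a (AS c rs F G wb sn H cl ok) =
     AS c rs F G wb sn (if i = 0 then nat (s01 (dco a) mod int p) else H)
       (nat (ev (dco a) (int (rs ! i)) mod int p))
       (ok \<and> (i = 0 \<or> nat (s01 (dco a) mod int p) = cl))"

definition msgA :: "nat \<Rightarrow> ast \<Rightarrow> bool list" where
  "msgA i st = (if i = 0 then [] else bits W2 (rsv st ! (i - 1)))"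

definition outA :: "ast \<Rightarrow> bool option" where
  "outA st = (if okv st \<and> clv st = (Fv st * Gv st) mod p then Some (odd (Hv st) = wbv st) else None)"

definition initA :: "nat list \<Rightarrow> ast" where
  "initA rs = AS 0 rs 0 0 False False 0 0 True"

definition Urs :: "nat list pmf" where
  "Urs = pmf_of_set (lists_of p ell)"

definition verif :: verifier where
  "verif = \<lparr> v_init = [],
     v_step = (\<lambda>a \<sigma>. if \<sigma> = [] then map_pmf (\<lambda>rs. enc (stepA a (initA rs))) Urs
                     else return_pmf (enc (stepA a (dec \<sigma>)))),
     v_rounds = ell,
     v_msg = (\<lambda>i \<sigma>. return_pmf (msgA i (dec \<sigma>), enc (dec \<sigma>))),
     v_recv = (\<lambda>i \<sigma> a. return_pmf (enc (recvA i a (dec \<sigma>)))),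
     v_out = (\<lambda>\<sigma>. return_pmf (outA (dec \<sigma>))),
     v_len = (\<lambda>i. W2),
     p_len = (\<lambda>i. 3 * W2) \<rparr>"

fun detA :: "prover \<Rightarrow> nat \<Rightarrow> bool list list \<Rightarrow> ast \<Rightarrow> ast" where
  "detA P 0 ms st = st"
| "detA P (Suc k) ms st = detA P k (ms @ [msgA (length ms) st])
      (recvA (length ms) (take (3*W2) (P (ms @ [msgA (length ms) st]))) st)"

lemma verif_simps[simp]:
  "v_init verif = []" "v_rounds verif = ell" "v_len verif = (\<lambda>i. W2)" "p_len verif = (\<lambda>i. 3*W2)"
  "v_step verif a \<sigma> = (if \<sigma> = [] then map_pmf (\<lambda>rs. enc (stepA a (initA rs))) Urs
                     else return_pmf (enc (stepA a (dec \<sigma>))))"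
  "v_msg verif i \<sigma> = return_pmf (msgA i (dec \<sigma>), enc (dec \<sigma>))"
  "v_recv verif i \<sigma> a' = return_pmf (enc (recvA i a' (dec \<sigma>)))"
  "v_out verif \<sigma> = return_pmf (outA (dec \<sigma>))"
  by (simp_all add: verif_def)

lemma enc_ne[simp]: "enc st \<noteq> []"
  by (simp add: enc_def)

lemma length_enc: "length (enc st) = 4 + W1 + 4*W2 + length (rsv st) * W2"
  by (simp add: enc_def length_concat o_def sum_list_triv)

lemma rsv_stepA[simp]: "rsv (stepA a st) = rsv st"
  by (cases a; cases st) auto

lemma rsv_recvA[simp]: "rsv (recvA i a st) = rsv st"
  by (cases st) auto

lemma length_rsv_dec[simp]: "length (rsv (dec \<sigma>)) = ell"
  by (simp add: dec_def)

lemma comm_verif: "comm verif = ell * (4 * W2)"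
  by (simp add: comm_def)

lemma set_pmf_Urs: "p > 0 \<Longrightarrow> set_pmf Urs = lists_of p ell"
proof -
  assume "p > 0"
  hence "replicate ell 0 \<in> lists_of p ell" by (auto simp: lists_of_def)
  hence "lists_of p ell \<noteq> {}" by blast
  thus ?thesis by (simp add: Urs_def finite_lists_of)
qed

lemma space_verif:
  assumes "p > 0"
  shows "space_bounded verif (4 + W1 + 4*W2 + ell * W2)"
  unfolding space_bounded_def
  using assms by (auto simp: length_enc set_pmf_Urs lists_of_def initA_def msgA_def)

end

locale proto_ok = proto +
  assumes p_prime: "prime p"
    and n_W1: "n < 2^W1"
    and p_W2: "p \<le> 2^W2"
begin

lemma p_pos: "p > 0" using p_prime prime_gt_0_nat by blast

lemma dec_enc: "valid st \<Longrightarrow> dec (enc st) = st"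
proof (cases st)
  case (AS c rs F G wb sn H cl ok)
  assume v: "valid st"
  have b1: "c < 2^W1" using v AS n_W1 by (simp add: valid_def)
  have b2: "F < 2^W2" "G < 2^W2" "H < 2^W2" "cl < 2^W2" using v AS p_W2 by (auto simp: valid_def)
  have b3: "\<forall>r\<in>set rs. r < 2^W2" using v AS p_W2 by (auto simp: valid_def)
  have lr: "length rs = ell" using v AS by (simp add: valid_def)
  define pre where "pre = True # bits W1 c @ bits W2 F @ bits W2 G @ bits W2 H @ bits W2 cl @ [wb, sn, ok]"
  have lpre: "length pre = 4 + W1 + 4*W2" by (simp add: pre_def)
  have e: "enc (AS c rs F G wb sn H cl ok) = pre @ concat (map (bits W2) rs)" by (simp add: enc_def pre_def)
  have rsd: "map (\<lambda>i. hs (take W2 (drop ((4 + W1 + 4*W2) + i*W2) (enc st)))) [0..<ell] = rs"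
    unfolding AS e using rs_decode[OF b3 lpre] lr by simp
  show ?thesis
    unfolding dec_def rsd using b1 b2
    by (simp add: e pre_def AS hs_bits nth_append)
qed

lemma valid_stepA: "valid st \<Longrightarrow> valid (stepA a st)"
  using p_pos by (cases a; cases st) (auto simp: valid_def nat_less_iff)

lemma valid_recvA: "valid st \<Longrightarrow> valid (recvA i a st)"
  using p_pos by (cases st) (auto simp: valid_def nat_less_iff)

lemma valid_initA: "rs \<in> lists_of p ell \<Longrightarrow> valid (initA rs)"
  using p_pos by (auto simp: valid_def initA_def lists_of_def)

lemma run_stream_det:
  "valid st \<Longrightarrow> run_stream verif as (enc st) = return_pmf (enc (foldl (\<lambda>s a. stepA a s) st as))"
proof (induction as arbitrary: st)
  case Nil then show ?case by simp
next
  case (Cons a as)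
  have "run_stream verif (a # as) (enc st) = run_stream verif as (enc (stepA a st))"
    using Cons.prems by (simp add: dec_enc bind_return_pmf)
  also have "... = return_pmf (enc (foldl (\<lambda>s a. stepA a s) (stepA a st) as))"
    by (rule Cons.IH) (rule valid_stepA[OF Cons.prems])
  finally show ?case by simp
qed

lemma run_rounds_det:
  "valid st \<Longrightarrow> run_rounds verif P k ms (enc st) = return_pmf (enc (detA P k ms st))"
proof (induction k arbitrary: ms st)
  case 0 then show ?case by simp
next
  case (Suc k)
  have v': "valid (recvA (length ms) (take (3*W2) (P (ms @ [msgA (length ms) st]))) st)"
    by (rule valid_recvA[OF Suc.prems])
  have "run_rounds verif P (Suc k) ms (enc st) =
      run_rounds verif P k (ms @ [msgA (length ms) st])
        (enc (recvA (length ms) (take (3*W2) (P (ms @ [msgA (length ms) st]))) st))"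
    using Suc.prems by (simp add: dec_enc bind_return_pmf)
  also have "... = return_pmf (enc (detA P (Suc k) ms st))"
    using Suc.IH[OF v'] by simp
  finally show ?case .
qed

lemma valid_foldl: "valid st \<Longrightarrow> valid (foldl (\<lambda>s a. stepA a s) st as)"
  by (induction as arbitrary: st) (auto intro: valid_stepA)

lemma valid_detA: "valid st \<Longrightarrow> valid (detA P k ms st)"
  by (induction k arbitrary: ms st) (auto intro: valid_recvA)

lemma outcome_eq:
  assumes "toks \<noteq> []"
  shows "outcome verif P toks =
    map_pmf (\<lambda>rs. outA (detA P ell [] (foldl (\<lambda>s a. stepA a s) (initA rs) toks))) Urs"
proof -
  obtain a as where t: "toks = a # as" using assms by (cases toks) auto
  have "outcome verif P toks = bind_pmf (map_pmf (\<lambda>rs. enc (stepA a (initA rs))) Urs)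
      (\<lambda>\<sigma>. bind_pmf (run_stream verif as \<sigma>) (\<lambda>\<sigma>. bind_pmf (run_rounds verif P ell [] \<sigma>) (v_out verif)))"
    by (simp add: outcome_def t bind_assoc_pmf)
  also have "... = bind_pmf Urs (\<lambda>rs. return_pmf (outA (detA P ell [] (foldl (\<lambda>s a. stepA a s) (initA rs) toks))))"
    unfolding map_pmf_def bind_assoc_pmf bind_return_pmf
  proof (rule bind_pmf_cong[OF refl])
    fix rs assume "rs \<in> set_pmf Urs"
    hence v: "valid (stepA a (initA rs))" using valid_initA valid_stepA set_pmf_Urs p_pos by blast
    have v2: "valid (foldl (\<lambda>s a. stepA a s) (stepA a (initA rs)) as)"
      using v by (rule valid_foldl)
    show "bind_pmf (run_stream verif as (enc (stepA a (initA rs))))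
          (\<lambda>\<sigma>. bind_pmf (run_rounds verif P ell [] \<sigma>) (v_out verif)) =
        return_pmf (outA (detA P ell [] (foldl (\<lambda>s a. stepA a s) (initA rs) toks)))"
      using v v2 by (simp add: run_stream_det run_rounds_det t dec_enc valid_detA bind_return_pmf)
  qed
  finally show ?thesis by (simp add: map_pmf_def)
qed

end

locale inst = proto_ok +
  fixes t :: nat and x :: "nat \<Rightarrow> bool" and Ms :: "nat list list" and w :: "bool list"
  assumes inst: "bhh_instance n t x Ms w"
    and t_p: "t < p" and n_ell: "n \<le> 2^ell" and n_pos: "n \<ge> 1" and ell_p: "6 * ell < p"
    and ell_pos: "ell \<ge> 1"
begin

definition e0 where "e0 = Ms ! 0"
definition b0 where "b0 = w ! 0"
definition fx :: "nat \<Rightarrow> int" where "fx i = (if i < n \<and> x i then 1 else 0)"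
definition gx :: "nat \<Rightarrow> int" where "gx i = (if i \<in> set e0 then 1 else 0)"
definition Tfun :: "nat list \<Rightarrow> int \<times> int \<times> int" where
  "Tfun pre = coefs (ell - Suc (length pre)) (foldall pre fx) (foldall pre gx)"
definition tr :: "nat list \<Rightarrow> nat \<Rightarrow> int" where
  "tr rs i = SS (ell - i) (foldall (take i rs) fx) (foldall (take i rs) gx)"

lemma Ms_ne: "Ms \<noteq> []"
proof
  assume "Ms = []"
  hence "{..<n} = {}" using inst by (simp add: bhh_instance_def perfect_hypermatching_def)
  thus False using n_pos by (metis lessThan_empty_iff not_one_le_zero)
qed

lemma e0_props: "distinct e0" "length e0 = t" "set e0 \<subseteq> {..<n}"
  using inst Ms_ne unfolding bhh_instance_def perfect_hypermatching_def e0_def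
  by (auto simp: nth_mem)

lemma w_len: "length w = length Ms"
  using inst by (simp add: bhh_instance_def)

lemma ans_iff: "bhh_yes x Ms w \<longleftrightarrow> (edge_parity x e0 = b0)"
  using inst Ms_ne unfolding bhh_instance_def bhh_yes_def bhh_no_def e0_def b0_def
  by auto

lemma count_SS: "SS ell fx gx = int (length (filter x e0))"
proof -
  have "SS ell fx gx = (\<Sum>i<2^ell. if i \<in> set e0 \<and> x i then 1 else 0)"
    unfolding SS_def fx_def gx_def
    by (rule sum.cong) (use e0_props(3) in auto)
  also have "... = int (card ({..<2^ell} \<inter> {i. i \<in> set e0 \<and> x i}))"
    by (simp add: sum.If_cases)
  also have "{..<2^ell} \<inter> {i. i \<in> set e0 \<and> x i} = {i. x i} \<inter> set e0"
    using e0_props(3) n_ell by auto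
  also have "card ({i. x i} \<inter> set e0) = length (filter x e0)"
    using distinct_length_filter[OF e0_props(1), of x] by simp
  finally show ?thesis .
qed

lemma count_lt_p: "length (filter x e0) < p"
  using length_filter_le[of x e0] e0_props(2) t_p by simp

lemma xfold:
  "j \<le> n \<Longrightarrow> foldl (\<lambda>s a. stepA a s) (initA rs) (map (\<lambda>i. XBit (x i)) [0..<j])
     = AS j rs (nat ((\<Sum>i<j. if x i then chi i rs else 0) mod int p)) 0 False False 0 0 True"
proof (induction j)
  case 0 then show ?case by (simp add: initA_def)
next
  case (Suc j)
  have "j < n" using Suc.prems by simp
  have pp: "int p > 0" using p_pos by simp
  show ?case
    using Suc \<open>j < n\<close> pp by (simp add: mod_add_left_eq)
qed

lemma efold_seen: "seenv st \<Longrightarrow> foldl (\<lambda>s a. stepA a s) st (map (\<lambda>(e, b). Edge e b) zs) = st"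
proof (induction zs)
  case Nil then show ?case by simp
next
  case (Cons z zs)
  obtain e b where z: "z = (e, b)" by (cases z) auto
  have "stepA (Edge e b) st = st" using Cons.prems by (cases st) auto
  thus ?case using Cons z by simp
qed

definition Fsum :: "nat list \<Rightarrow> nat" where
  "Fsum rs = nat ((\<Sum>i<n. if x i then chi i rs else 0) mod int p)"
definition Gsum :: "nat list \<Rightarrow> nat" where
  "Gsum rs = nat ((\<Sum>i\<leftarrow>e0. chi i rs) mod int p)"

lemma stream_fold:
  "foldl (\<lambda>s a. stepA a s) (initA rs) (bhh_stream n x Ms w) = AS n rs (Fsum rs) (Gsum rs) b0 True 0 0 True"
proof -
  have z: "zip Ms w = (e0, b0) # zip (tl Ms) (tl w)"
    unfolding e0_def b0_def using Ms_ne w_len by (cases Ms; cases w) auto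
  show ?thesis
    unfolding bhh_stream_def foldl_append z
    by (simp add: xfold efold_seen Fsum_def Gsum_def)
qed

lemma sum_restrict:
  fixes h :: "nat \<Rightarrow> int"
  assumes "n \<le> N"
  shows "(\<Sum>i<N. if i < n then h i else 0) = (\<Sum>i<n. h i)"
proof -
  have "(\<Sum>i<N. if i < n then h i else 0) = (\<Sum>i\<in>{..<N} \<inter> {i. i < n}. h i)"
    by (simp add: sum.If_cases)
  also have "{..<N} \<inter> {i. i < n} = {..<n}" using assms by auto
  finally show ?thesis .
qed

lemma Fsum_eq: "length rs = ell \<Longrightarrow> int (Fsum rs) = foldall rs fx 0 mod int p"
proof -
  assume l: "length rs = ell"
  have "foldall rs fx 0 = (\<Sum>i<2^ell. if i < n then (if x i then chi i rs else 0) else 0)"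
    unfolding foldall_chi l fx_def by (rule sum.cong) auto
  also have "... = (\<Sum>i<n. if x i then chi i rs else 0)"
    by (rule sum_restrict[OF n_ell])
  finally show ?thesis using p_pos by (simp add: Fsum_def)
qed

lemma Gsum_eq: "length rs = ell \<Longrightarrow> int (Gsum rs) = foldall rs gx 0 mod int p"
proof -
  assume l: "length rs = ell"
  have "(\<Sum>i\<leftarrow>e0. chi i rs) = (\<Sum>i\<in>set e0. chi i rs)"
    using e0_props(1) by (simp add: sum_list_distinct_conv_sum_set)
  also have "... = (\<Sum>i\<in>{..<2^ell} \<inter> {i. i \<in> set e0}. chi i rs)"
  proof -
    have "{..<2^ell} \<inter> {i. i \<in> set e0} = set e0" using e0_props(3) n_ell by auto
    thus ?thesis by simp
  qed
  also have "... = (\<Sum>i<2^ell. if i \<in> set e0 then chi i rs else 0)"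
    by (simp add: sum.If_cases)
  also have "... = (\<Sum>i<2^ell. gx i * chi i rs)"
    by (rule sum.cong) (auto simp: gx_def)
  also have "... = foldall rs gx 0" unfolding foldall_chi l ..
  finally show ?thesis using p_pos by (simp add: Gsum_def)
qed

definition mL :: "nat list \<Rightarrow> nat \<Rightarrow> bool list list" where
  "mL rs j = map (\<lambda>i. if i = 0 then [] else bits W2 (rs ! (i - 1))) [0..<j]"

fun stR :: "prover \<Rightarrow> ast \<Rightarrow> nat \<Rightarrow> ast" where
  "stR P st0 0 = st0"
| "stR P st0 (Suc i) = recvA i (take (3*W2) (P (mL (rsv st0) (Suc i)))) (stR P st0 i)"

lemma rsv_stR[simp]: "rsv (stR P st0 i) = rsv st0"
  by (induction i) auto

lemma length_mL[simp]: "length (mL rs j) = j" by (simp add: mL_def)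

lemma mL_Suc: "mL rs (Suc j) = mL rs j @ [if j = 0 then [] else bits W2 (rs ! (j - 1))]"
  by (simp add: mL_def)

lemma detA_stR: "detA P k (mL (rsv st0) j) (stR P st0 j) = stR P st0 (j + k)"
proof (induction k arbitrary: j)
  case 0 then show ?case by simp
next
  case (Suc k)
  have m: "mL (rsv st0) j @ [msgA j (stR P st0 j)] = mL (rsv st0) (Suc j)"
    by (simp add: mL_Suc msgA_def)
  show ?case using Suc.IH[of "Suc j"] by (simp add: m)
qed

lemma detA_start: "detA P ell [] st0 = stR P st0 ell"
  using detA_stR[of P ell st0 0] by (simp add: mL_def)

definition sc :: "prover \<Rightarrow> nat list \<Rightarrow> nat \<Rightarrow> int \<times> int \<times> int" where
  "sc P rs i = dco (take (3*W2) (P (mL rs (Suc i))))"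

lemma stR_form:
  "stR P (AS c rs F G wb sn 0 0 True) (Suc i) =
    AS c rs F G wb sn (nat (s01 (sc P rs 0) mod int p)) (nat (ev (sc P rs i) (int (rs ! i)) mod int p))
      (\<forall>j. 0 < j \<and> j < Suc i \<longrightarrow> s01 (sc P rs j) mod int p = ev (sc P rs (j-1)) (int (rs ! (j-1))) mod int p)"
proof (induction i)
  case 0 then show ?case by (simp add: sc_def)
next
  case (Suc i)
  have pp: "int p > 0" using p_pos by simp
  have e: "(nat (s01 (sc P rs (Suc i)) mod int p) = nat (ev (sc P rs i) (int (rs ! i)) mod int p))
      \<longleftrightarrow> (s01 (sc P rs (Suc i)) mod int p = ev (sc P rs i) (int (rs ! i)) mod int p)"
    using pp by (subst eq_nat_nat_iff) auto
  have "(\<forall>j. 0 < j \<and> j < Suc (Suc i) \<longrightarrow> s01 (sc P rs j) mod int p = ev (sc P rs (j-1)) (int (rs ! (j-1))) mod int p)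
     \<longleftrightarrow> (\<forall>j. 0 < j \<and> j < Suc i \<longrightarrow> s01 (sc P rs j) mod int p = ev (sc P rs (j-1)) (int (rs ! (j-1))) mod int p)
         \<and> s01 (sc P rs (Suc i)) mod int p = ev (sc P rs i) (int (rs ! i)) mod int p"
    by (auto simp: less_Suc_eq)
  then show ?case using Suc.IH e by (simp add: sc_def)
qed

definition result :: "prover \<Rightarrow> nat list \<Rightarrow> bool option" where
  "result P rs = outA (detA P ell [] (foldl (\<lambda>s a. stepA a s) (initA rs) (bhh_stream n x Ms w)))"

lemma stream_ne: "bhh_stream n x Ms w \<noteq> []"
  using n_pos by (simp add: bhh_stream_def)

lemma outcome_result: "outcome verif P (bhh_stream n x Ms w) = map_pmf (result P) Urs"
  unfolding result_def by (rule outcome_eq[OF stream_ne])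

lemma result_form:
  "result P rs =
    (if (\<forall>j. 0 < j \<and> j < ell \<longrightarrow> s01 (sc P rs j) mod int p = ev (sc P rs (j-1)) (int (rs ! (j-1))) mod int p)
       \<and> nat (ev (sc P rs (ell - 1)) (int (rs ! (ell - 1))) mod int p) = (Fsum rs * Gsum rs) mod p
     then Some (odd (nat (s01 (sc P rs 0) mod int p)) = b0) else None)"
proof -
  obtain m where m: "ell = Suc m" using ell_pos by (cases ell) auto
  have S: "stR P (AS n rs (Fsum rs) (Gsum rs) b0 True 0 0 True) ell =
    AS n rs (Fsum rs) (Gsum rs) b0 True (nat (s01 (sc P rs 0) mod int p)) (nat (ev (sc P rs m) (int (rs ! m)) mod int p))
      (\<forall>j. 0 < j \<and> j < Suc m \<longrightarrow> s01 (sc P rs j) mod int p = ev (sc P rs (j-1)) (int (rs ! (j-1))) mod int p)"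
    unfolding m by (rule stR_form)
  show ?thesis
    unfolding result_def stream_fold detA_start S
    using m by (auto simp: outA_def)
qed

end

lemma polyeq_ev: "polyeq p c d \<Longrightarrow> ev c r mod int p = ev d r mod int p"
  by (simp add: polyeq_def)

lemma polyeq_s01: "polyeq p c d \<Longrightarrow> s01 c mod int p = s01 d mod int p"
  unfolding s01_def polyeq_def by (metis mod_add_eq)

lemma polyeq_mod: "polyeq p (a mod int p, b mod int p, c mod int p) (a, b, c)"
  unfolding polyeq_def ev_def
proof (intro allI)
  fix r
  define P where "P = int p"
  have d: "\<And>z. P dvd (z mod P - z)" by (simp add: mod_eq_dvd_iff[symmetric])
  have eq: "(a mod P + b mod P * r + c mod P * r^2) - (a + b * r + c * r^2)
      = (a mod P - a) + (b mod P - b) * r + (c mod P - c) * r^2" by (simp add: algebra_simps)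
  have dv: "P dvd (a mod P - a) + (b mod P - b) * r + (c mod P - c) * r^2"
    using d by (intro dvd_add dvd_mult2) auto
  have "P dvd (a mod P + b mod P * r + c mod P * r^2) - (a + b * r + c * r^2)"
    unfolding eq by (rule dv)
  thus "(fst (a mod int p, b mod int p, c mod int p) + fst (snd (a mod int p, b mod int p, c mod int p)) * r
         + snd (snd (a mod int p, b mod int p, c mod int p)) * r\<^sup>2) mod int p =
        (fst (a, b, c) + fst (snd (a, b, c)) * r + snd (snd (a, b, c)) * r\<^sup>2) mod int p"
    unfolding P_def by (simp add: mod_eq_dvd_iff)
qed

lemma SS_0: "SS 0 f g = f 0 * g 0" by (simp add: SS_def)

context inst
begin

lemma T1: "i < ell \<Longrightarrow> length rs = ell \<Longrightarrow> s01 (Tfun (take i rs)) = tr rs i"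
proof -
  assume i: "i < ell" and l: "length rs = ell"
  have "Suc (ell - Suc i) = ell - i" using i by simp
  thus ?thesis using i l by (simp add: Tfun_def tr_def s01_coefs)
qed

lemma T2: "i < ell \<Longrightarrow> length rs = ell \<Longrightarrow> ev (Tfun (take i rs)) (int (rs ! i)) = tr rs (Suc i)"
proof -
  assume i: "i < ell" and l: "length rs = ell"
  have tk: "take (Suc i) rs = take i rs @ [rs ! i]" using i l by (simp add: take_Suc_conv_app_nth)
  show ?thesis using i l by (simp add: Tfun_def tr_def ev_coefs tk foldall_append)
qed

lemma T3: "length rs = ell \<Longrightarrow> tr rs ell = foldall rs fx 0 * foldall rs gx 0"
  by (simp add: tr_def SS_0)

lemma T4: "tr rs 0 = SS ell fx gx"
  by (simp add: tr_def)

lemma chain: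
  assumes rs: "length rs = ell"
    and A: "\<forall>j. 0 < j \<and> j < ell \<longrightarrow> s01 (s j) mod int p = ev (s (j-1)) (int (rs!(j-1))) mod int p"
    and B: "ev (s (ell-1)) (int (rs!(ell-1))) mod int p = (foldall rs fx 0 * foldall rs gx 0) mod int p"
    and C: "\<forall>i<ell. polyeq p (s i) (Tfun (take i rs)) \<or>
              ev (s i) (int (rs!i)) mod int p \<noteq> ev (Tfun (take i rs)) (int (rs!i)) mod int p"
  shows "s01 (s 0) mod int p = SS ell fx gx mod int p"
proof -
  have key: "d < ell \<Longrightarrow> polyeq p (s (ell - 1 - d)) (Tfun (take (ell - 1 - d) rs))" for d
  proof (induction d)
    case 0
    have i: "ell - 1 < ell" "Suc (ell - 1) = ell" using 0 by auto
    have "ev (Tfun (take (ell - 1) rs)) (int (rs ! (ell - 1))) = tr rs ell"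
      using T2[OF i(1) rs] i(2) by simp
    hence "ev (s (ell-1)) (int (rs!(ell-1))) mod int p = ev (Tfun (take (ell - 1) rs)) (int (rs ! (ell - 1))) mod int p"
      using B T3[OF rs] by simp
    thus ?case using C i(1) by auto
  next
    case (Suc d)
    define i where "i = ell - 1 - Suc d"
    have i1: "Suc i = ell - 1 - d" "Suc i < ell" "i < ell" using Suc.prems by (auto simp: i_def)
    have IH: "polyeq p (s (Suc i)) (Tfun (take (Suc i) rs))" using Suc.IH Suc.prems i1 by simp
    have "s01 (s (Suc i)) mod int p = ev (s (Suc i - 1)) (int (rs ! (Suc i - 1))) mod int p"
      using A i1(2) by blast
    hence "ev (s i) (int (rs!i)) mod int p = s01 (s (Suc i)) mod int p" by simp
    also have "... = s01 (Tfun (take (Suc i) rs)) mod int p" using polyeq_s01[OF IH] .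
    also have "... = tr rs (Suc i) mod int p" using T1[OF i1(2) rs] by simp
    also have "... = ev (Tfun (take i rs)) (int (rs ! i)) mod int p" using T2[OF i1(3) rs] by simp
    finally have "ev (s i) (int (rs!i)) mod int p = ev (Tfun (take i rs)) (int (rs ! i)) mod int p" .
    hence "polyeq p (s i) (Tfun (take i rs))" using C i1(3) by blast
    thus ?case by (simp add: i_def)
  qed
  have "polyeq p (s 0) (Tfun (take 0 rs))" using key[of "ell - 1"] ell_pos by simp
  hence "s01 (s 0) mod int p = s01 (Tfun (take 0 rs)) mod int p" by (rule polyeq_s01)
  also have "... = SS ell fx gx mod int p" using T1[of 0 rs] ell_pos rs T4 by simp
  finally show ?thesis .
qed

lemma mL_take: "i \<le> length rs \<Longrightarrow> mL rs (Suc i) = [] # map (bits W2) (take i rs)"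
proof (rule nth_equalityI)
  assume i: "i \<le> length rs"
  show "length (mL rs (Suc i)) = length ([] # map (bits W2) (take i rs))" using i by simp
  fix k assume "k < length (mL rs (Suc i))"
  hence k: "k < Suc i" by simp
  show "mL rs (Suc i) ! k = ([] # map (bits W2) (take i rs)) ! k"
  proof (cases k)
    case 0 then show ?thesis using k by (simp add: mL_def del: upt_Suc)
  next
    case (Suc k')
    then show ?thesis using k i by (simp add: mL_def nth_Cons' del: upt_Suc)
  qed
qed

definition Phon :: prover where
  "Phon ms = (let c = Tfun (map hs (tl ms)) in
     bits W2 (nat (fst c mod int p)) @ bits W2 (nat (fst (snd c) mod int p)) @ bits W2 (nat (snd (snd c) mod int p)))"

lemma map_hs_bits: "\<forall>r\<in>set rs. r < p \<Longrightarrow> map hs (map (bits W2) rs) = rs"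
proof -
  assume a: "\<forall>r\<in>set rs. r < p"
  have "\<forall>r\<in>set rs. hs (bits W2 r) = r" using a p_W2 hs_bits by (meson order.strict_trans2)
  thus ?thesis by (induction rs) auto
qed

lemma nat_mod_lt: "nat (y mod int p) < 2^W2"
proof -
  have "nat (y mod int p) < p" using p_pos by (simp add: nat_less_iff)
  thus ?thesis using p_W2 by (meson order.strict_trans2)
qed

lemma sc_hon:
  assumes rs: "rs \<in> lists_of p ell" and i: "i < ell"
  shows "sc Phon rs i = (fst (Tfun (take i rs)) mod int p, fst (snd (Tfun (take i rs))) mod int p,
                         snd (snd (Tfun (take i rs))) mod int p)"
proof -
  have l: "length rs = ell" and rp: "\<forall>r\<in>set rs. r < p" using rs by (auto simp: lists_of_def)
  have "\<forall>r\<in>set (take i rs). r < p" using rp by (meson in_set_takeD)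
  hence mh: "map hs (tl (mL rs (Suc i))) = take i rs"
    using mL_take[of i rs] i l map_hs_bits by simp
  have pp: "int p > 0" using p_pos by simp
  show ?thesis
    unfolding sc_def Phon_def mh Let_def dco_def
    using pp by (simp add: hs_bits[OF nat_mod_lt])
qed

lemma FG: "length rs = ell \<Longrightarrow> int ((Fsum rs * Gsum rs) mod p) = (foldall rs fx 0 * foldall rs gx 0) mod int p"
proof -
  assume l: "length rs = ell"
  have "int ((Fsum rs * Gsum rs) mod p) = (int (Fsum rs) * int (Gsum rs)) mod int p"
    by (simp add: of_nat_mod)
  also have "... = ((foldall rs fx 0 mod int p) * (foldall rs gx 0 mod int p)) mod int p"
    using Fsum_eq[OF l] Gsum_eq[OF l] by simp
  also have "... = (foldall rs fx 0 * foldall rs gx 0) mod int p" by (simp add: mod_mult_eq)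
  finally show ?thesis .
qed

lemma complete:
  assumes rs: "rs \<in> lists_of p ell"
  shows "result Phon rs = Some (bhh_yes x Ms w)"
proof -
  have l: "length rs = ell" using rs by (simp add: lists_of_def)
  have pp: "int p > 0" using p_pos by simp
  let ?s = "sc Phon rs"
  have pe: "polyeq p (?s i) (Tfun (take i rs))" if "i < ell" for i
    using sc_hon[OF rs that] polyeq_mod by (metis prod.collapse)
  have A: "\<forall>j. 0 < j \<and> j < ell \<longrightarrow> s01 (?s j) mod int p = ev (?s (j-1)) (int (rs ! (j-1))) mod int p"
  proof (intro allI impI)
    fix j assume j: "0 < j \<and> j < ell"
    have j1: "j - 1 < ell" "Suc (j-1) = j" using j by auto
    have "s01 (?s j) mod int p = s01 (Tfun (take j rs)) mod int p" using polyeq_s01[OF pe] j by simp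
    also have "... = tr rs j mod int p" using T1 j l by simp
    also have "... = ev (Tfun (take (j-1) rs)) (int (rs ! (j-1))) mod int p" using T2[OF j1(1) l] j1(2) by simp
    also have "... = ev (?s (j-1)) (int (rs ! (j-1))) mod int p" using polyeq_ev[OF pe[OF j1(1)]] by simp
    finally show "s01 (?s j) mod int p = ev (?s (j-1)) (int (rs ! (j-1))) mod int p" .
  qed
  have e1: "ell - 1 < ell" "Suc (ell - 1) = ell" using ell_pos by auto
  have "ev (?s (ell - 1)) (int (rs ! (ell - 1))) mod int p = ev (Tfun (take (ell-1) rs)) (int (rs ! (ell - 1))) mod int p"
    using polyeq_ev[OF pe[OF e1(1)]] .
  also have "... = tr rs ell mod int p" using T2[OF e1(1) l] e1(2) by simp
  also have "... = (foldall rs fx 0 * foldall rs gx 0) mod int p" using T3[OF l] by simp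
  also have "... = int ((Fsum rs * Gsum rs) mod p)"
    using FG[OF l] by simp
  finally have B: "nat (ev (?s (ell - 1)) (int (rs ! (ell - 1))) mod int p) = (Fsum rs * Gsum rs) mod p"
    by simp
  have "s01 (?s 0) mod int p = s01 (Tfun (take 0 rs)) mod int p" using polyeq_s01[OF pe] ell_pos by simp
  also have "... = SS ell fx gx mod int p" using T1[of 0 rs] ell_pos l T4 by simp
  also have "... = int (length (filter x e0))" using count_SS count_lt_p by simp
  finally have H: "nat (s01 (?s 0) mod int p) = length (filter x e0)" by simp
  show ?thesis
    unfolding result_form using A B H
    by (simp add: ans_iff edge_parity_def)
qed

definition Afn :: "prover \<Rightarrow> nat list \<Rightarrow> int \<times> int \<times> int" where
  "Afn P pre = dco (take (3*W2) (P ([] # map (bits W2) pre)))"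

lemma sound:
  assumes rs: "rs \<in> lists_of p ell" and res: "result P rs = Some (\<not> bhh_yes x Ms w)"
  shows "rs \<in> badset p ell (Afn P) Tfun"
proof (rule ccontr)
  assume nb: "rs \<notin> badset p ell (Afn P) Tfun"
  have l: "length rs = ell" using rs by (simp add: lists_of_def)
  let ?s = "sc P rs"
  have sA: "?s i = Afn P (take i rs)" if "i < ell" for i
    using mL_take[of i rs] that l by (simp add: sc_def Afn_def)
  have C: "\<forall>i<ell. polyeq p (?s i) (Tfun (take i rs)) \<or>
              ev (?s i) (int (rs!i)) mod int p \<noteq> ev (Tfun (take i rs)) (int (rs!i)) mod int p"
    using nb rs sA unfolding badset_def by auto
  define cond where "cond = ((\<forall>j. 0 < j \<and> j < ell \<longrightarrow> s01 (?s j) mod int p = ev (?s (j-1)) (int (rs ! (j-1))) mod int p)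
       \<and> nat (ev (?s (ell - 1)) (int (rs ! (ell - 1))) mod int p) = (Fsum rs * Gsum rs) mod p)"
  have cnd: cond and v: "(odd (nat (s01 (?s 0) mod int p)) = b0) = (\<not> bhh_yes x Ms w)"
    using res unfolding result_form cond_def[symmetric] by (auto split: if_splits)
  have A: "\<forall>j. 0 < j \<and> j < ell \<longrightarrow> s01 (?s j) mod int p = ev (?s (j-1)) (int (rs ! (j-1))) mod int p"
    using cnd cond_def by simp
  have "int (nat (ev (?s (ell - 1)) (int (rs ! (ell - 1))) mod int p)) = int ((Fsum rs * Gsum rs) mod p)"
    using cnd cond_def by simp
  hence B: "ev (?s (ell-1)) (int (rs!(ell-1))) mod int p = (foldall rs fx 0 * foldall rs gx 0) mod int p"
    using p_pos FG[OF l] by simp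
  have "s01 (?s 0) mod int p = SS ell fx gx mod int p" by (rule chain[OF l A B C])
  also have "... = int (length (filter x e0))" using count_SS count_lt_p by simp
  finally have "nat (s01 (?s 0) mod int p) = length (filter x e0)" by simp
  thus False using v by (auto simp: ans_iff edge_parity_def)
qed

lemma prob_bad: "measure_pmf.prob Urs (badset p ell A B) \<le> 1/3"
proof -
  have ne: "lists_of p ell \<noteq> {}" using set_pmf_Urs[OF p_pos] set_pmf_not_empty by metis
  have sub: "badset p ell A B \<subseteq> lists_of p ell" by (auto simp: badset_def)
  have "measure_pmf.prob Urs (badset p ell A B) = card (lists_of p ell \<inter> badset p ell A B) / card (lists_of p ell)"
    unfolding Urs_def by (rule measure_pmf_of_set[OF ne finite_lists_of])
  also have "lists_of p ell \<inter> badset p ell A B = badset p ell A B" using sub by blast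
  also have "real (card (badset p ell A B)) / real (card (lists_of p ell)) \<le> 1/3"
  proof -
    have c: "real (card (badset p ell A B)) * real p \<le> 2 * real ell * real p ^ ell"
      using badset_card[OF p_prime, of ell A B] by (metis (mono_tags) of_nat_le_iff of_nat_mult of_nat_power of_nat_numeral)
    have pe: "real (card (lists_of p ell)) = real p ^ ell" by (simp add: card_lists_of)
    have pp: "real p > 0" using p_pos by simp
    have ppe: "real p ^ ell > 0" using pp by simp
    have "6 * real ell < real p" using ell_p by linarith
    hence "2 * real ell * real p ^ ell \<le> (1/3) * real p * real p ^ ell" using ppe by (simp add: mult_right_mono)
    hence "real (card (badset p ell A B)) * real p \<le> (1/3) * real p ^ ell * real p" using c by (simp add: algebra_simps)
    hence "real (card (badset p ell A B)) \<le> (1/3) * real p ^ ell" using pp by simp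
    thus ?thesis unfolding pe using ppe by (simp add: divide_le_eq)
  qed
  finally show ?thesis .
qed

lemma sip_parts:
  "(\<exists>P. measure_pmf.prob (outcome verif P (bhh_stream n x Ms w)) {Some (bhh_yes x Ms w)} \<ge> 2/3)
 \<and> (\<forall>P. measure_pmf.prob (outcome verif P (bhh_stream n x Ms w)) {Some (bhh_yes x Ms w), None} \<ge> 2/3)"
proof
  have "map_pmf (result Phon) Urs = map_pmf (\<lambda>_. Some (bhh_yes x Ms w)) Urs"
    by (rule map_pmf_cong[OF refl]) (use complete set_pmf_Urs[OF p_pos] in auto)
  hence "outcome verif Phon (bhh_stream n x Ms w) = return_pmf (Some (bhh_yes x Ms w))"
    by (simp add: outcome_result)
  thus "\<exists>P. measure_pmf.prob (outcome verif P (bhh_stream n x Ms w)) {Some (bhh_yes x Ms w)} \<ge> 2/3"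
    by (intro exI[of _ Phon]) simp
next
  show "\<forall>P. measure_pmf.prob (outcome verif P (bhh_stream n x Ms w)) {Some (bhh_yes x Ms w), None} \<ge> 2/3"
  proof
    fix P
    let ?a = "bhh_yes x Ms w"
    let ?E = "result P -` {Some (\<not> ?a)}"
    have cmp: "result P -` {Some ?a, None} = UNIV - ?E"
    proof -
      have "\<And>v::bool option. v \<in> {Some ?a, None} \<longleftrightarrow> v \<noteq> Some (\<not> ?a)"
        by (case_tac v) auto
      thus ?thesis by auto
    qed
    have "measure_pmf.prob Urs ?E = measure_pmf.prob Urs (?E \<inter> set_pmf Urs)"
      by (simp add: measure_Int_set_pmf)
    also have "... \<le> measure_pmf.prob Urs (badset p ell (Afn P) Tfun)"
    proof (rule measure_pmf.finite_measure_mono)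
      show "?E \<inter> set_pmf Urs \<subseteq> badset p ell (Afn P) Tfun"
        using sound set_pmf_Urs[OF p_pos] by auto
    qed simp
    also have "... \<le> 1/3" by (rule prob_bad)
    finally have E: "measure_pmf.prob Urs ?E \<le> 1/3" .
    have "measure_pmf.prob (outcome verif P (bhh_stream n x Ms w)) {Some ?a, None}
        = measure_pmf.prob Urs (UNIV - ?E)"
      by (simp add: outcome_result cmp)
    also have "... = 1 - measure_pmf.prob Urs ?E"
      using measure_pmf.prob_compl[of ?E Urs] by simp
    finally show "measure_pmf.prob (outcome verif P (bhh_stream n x Ms w)) {Some ?a, None} \<ge> 2/3"
      using E by simp
  qed
qed

end

definition clog :: "nat \<Rightarrow> nat" where "clog x = (LEAST k. x \<le> 2^k)"

lemma clog_le: "x \<le> 2 ^ clog x"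
  unfolding clog_def by (rule LeastI[of _ x]) (simp add: less_imp_le)

lemma clog_min: "x \<ge> 2 \<Longrightarrow> 2 ^ (clog x - 1) < x \<and> clog x \<ge> 1"
proof -
  assume x: "x \<ge> 2"
  have c1: "clog x \<ge> 1"
  proof (rule ccontr)
    assume "\<not> clog x \<ge> 1"
    hence "clog x = 0" by simp
    thus False using clog_le[of x] x by simp
  qed
  have "\<not> x \<le> 2 ^ (clog x - 1)"
  proof
    assume "x \<le> 2 ^ (clog x - 1)"
    hence "clog x \<le> clog x - 1" unfolding clog_def by (rule Least_le)
    thus False using c1 by simp
  qed
  thus ?thesis using c1 by simp
qed

lemma clog_real: "x \<ge> 2 \<Longrightarrow> real (clog x) \<le> log 2 (real x) + 1"
proof -
  assume x: "x \<ge> 2"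
  have a: "2 ^ (clog x - 1) < x" and c1: "clog x \<ge> 1" using clog_min[OF x] by auto
  have "(2::real) powr real (clog x - 1) < real x"
    using a by (simp add: powr_realpow)
  hence "real (clog x - 1) < log 2 (real x)"
    using x by (subst less_log_iff) auto
  thus ?thesis using c1 by (simp add: of_nat_diff)
qed

lemma log2_le_self: "t \<ge> 1 \<Longrightarrow> log 2 (real t) \<le> real t"
proof -
  assume t: "t \<ge> 1"
  have "real t < 2 ^ t" using less_exp[of t] by (metis of_nat_less_iff of_nat_numeral of_nat_power)
  hence "log 2 (real t) < log 2 (2 ^ t)" using t by (subst log_less_cancel_iff) auto
  also have "log 2 ((2::real) ^ t) = real t" by (simp add: log_nat_power)
  finally show ?thesis by simp
qed

lemma real_bound:
  fixes L LL T E B :: real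
  assumes L: "L \<ge> 16" and LL: "LL \<ge> 4" and T: "T \<ge> 1" and E: "E \<le> L + 1" "E \<ge> 0"
    and B: "B \<le> 4 + LL + T" "B \<ge> 0"
  shows "5 + E + (4 + E) * (2*B+7) \<le> 100 * T * L * LL" and "E * (4 * (2*B+7)) \<le> 100 * T * L * LL"
proof -
  have TLL1: "T * LL \<ge> LL" using T LL by (simp add: mult_right_mono[of 1 T LL, simplified])
  have TLL2: "T * LL \<ge> 4 * T" using T LL by (simp add: mult_left_mono[of 4 LL T])
  have W: "2*B+7 \<le> 8 * (T * LL)" using B TLL1 TLL2 T LL by linarith
  have W0: "0 \<le> 2*B+7" using B by linarith
  define Q where "Q = L * (T * LL)"
  have Q0: "Q \<ge> 0" using L T LL TLL1 unfolding Q_def by simp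
  have Qe: "100 * T * L * LL = 100 * Q" unfolding Q_def by (simp add: algebra_simps)
  have "(4 + E) * (2*B+7) \<le> (2 * L) * (8 * (T * LL))"
    by (rule mult_mono) (use E L W W0 in auto)
  also have "... = 16 * Q" unfolding Q_def by (simp add: algebra_simps)
  finally have h1: "(4 + E) * (2*B+7) \<le> 16 * Q" .
  have h2: "5 + E \<le> 2 * Q"
  proof -
    have "1 \<le> T * LL" using TLL1 LL by linarith
    hence "L * 1 \<le> L * (T * LL)" using L by (intro mult_left_mono) auto
    hence "L \<le> Q" by (simp add: Q_def)
    thus ?thesis using E L by linarith
  qed
  show "5 + E + (4 + E) * (2*B+7) \<le> 100 * T * L * LL"
    unfolding Qe using h1 h2 Q0 by linarith
  have "E * (4 * (2*B+7)) \<le> (2 * L) * (4 * (8 * (T * LL)))"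
    by (rule mult_mono) (use E L W W0 in auto)
  also have "... = 64 * Q" unfolding Q_def by (simp add: algebra_simps)
  finally show "E * (4 * (2*B+7)) \<le> 100 * T * L * LL"
    unfolding Qe using Q0 by linarith
qed

lemma sip_exists:
  fixes n t :: nat
  assumes t1: "t \<ge> 1" and nN: "n \<ge> 2"
  shows "\<exists>V s. sip_for_bhh n t V \<and> space_bounded V s
     \<and> real s \<le> 5 + real (clog n) + (4 + real (clog n)) * (2 * real (clog (6 * clog n + t)) + 7)
     \<and> real (comm V) \<le> real (clog n) * (4 * (2 * real (clog (6 * clog n + t)) + 7))"
proof -
  define ell where "ell = clog n"
  define b where "b = clog (6 * ell + t)"
  obtain p :: nat where p: "prime p" "2^b < p" "p \<le> 2^(2*b+7)" using prime_exists_pow2[of b] by blast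
  define W1 where "W1 = ell + 1"
  define W2 where "W2 = 2*b+7"
  have ell1: "ell \<ge> 1" using clog_min[OF nN] by (simp add: ell_def)
  have nell: "n \<le> 2^ell" using clog_le by (simp add: ell_def)
  have pos2: "0 < (2::nat)^ell" by simp
  have "n < 2 * 2^ell" using nell pos2 by linarith
  hence nW1: "n < 2^W1" by (simp add: W1_def)
  have b6: "6 * ell + t \<le> 2^b" using clog_le by (simp add: b_def)
  have tp: "t < p" "6 * ell < p" using b6 p t1 by linarith+
  have pW2: "p \<le> 2^W2" using p by (simp add: W2_def)
  interpret proto_ok n p ell W1 W2
    by unfold_locales (use p nW1 pW2 in auto)
  have sip: "sip_for_bhh n t verif"
    unfolding sip_for_bhh_def Let_def
  proof (intro allI impI)
    fix x Ms w assume I: "bhh_instance n t x Ms w"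
    interpret inst n p ell W1 W2 t x Ms w
      by unfold_locales (use I tp nell nN ell1 in auto)
    show "(\<exists>P. 2/3 \<le> measure_pmf.prob (outcome verif P (bhh_stream n x Ms w)) {Some (bhh_yes x Ms w)})
        \<and> (\<forall>P. 2/3 \<le> measure_pmf.prob (outcome verif P (bhh_stream n x Ms w)) {Some (bhh_yes x Ms w), None})"
      using sip_parts by simp
  qed
  have sp: "space_bounded verif (4 + W1 + 4*W2 + ell * W2)" by (rule space_verif[OF p_pos])
  have s_eq: "real (4 + W1 + 4*W2 + ell * W2) = 5 + real ell + (4 + real ell) * (2 * real b + 7)"
    by (simp add: W1_def W2_def algebra_simps)
  have c1: "real (comm verif) = real ell * (4 * real W2)" using comm_verif by simp
  have w2: "real W2 = 2 * real b + 7" by (simp add: W2_def)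
  have c_eq: "real (comm verif) = real ell * (4 * (2 * real b + 7))"
    using c1 unfolding w2 .
  show ?thesis
    unfolding ell_def[symmetric] b_def[symmetric]
    using sip sp s_eq c_eq by (intro exI[of _ verif] exI[of _ "4 + W1 + 4*W2 + ell * W2"]) simp
qed

theorem lemma13:
  shows "\<exists>(C::real) N0. \<forall>n t k. t \<ge> 1 \<and> n = k * t \<and> n \<ge> N0 \<longrightarrow>
           (\<exists>V s. sip_for_bhh n t V \<and> space_bounded V s
              \<and> real s \<le> C * real t * log 2 (real n) * log 2 (log 2 (real n))
              \<and> real (comm V) \<le> C * real t * log 2 (real n) * log 2 (log 2 (real n)))"
proof (intro exI[of _ "100::real"] exI[of _ "65536::nat"] allI impI)
  fix n t k :: nat
  assume a: "t \<ge> 1 \<and> n = k * t \<and> n \<ge> 65536"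
  hence t1: "t \<ge> 1" and nN: "n \<ge> 65536" by auto
  have n2: "n \<ge> 2" using nN by simp
  define L where "L = log 2 (real n)"
  define LL where "LL = log 2 L"
  define E where "E = real (clog n)"
  define B where "B = real (clog (6 * clog n + t))"
  have L16: "L \<ge> 16"
  proof -
    have "log 2 (65536::real) = 16"
    proof -
      have "log 2 ((2::real) ^ 16) = 16" by (subst log_nat_power) auto
      moreover have "(2::real) ^ 16 = 65536" by simp
      ultimately show ?thesis by simp
    qed
    moreover have "log 2 (65536::real) \<le> log 2 (real n)" using nN by (subst log_le_cancel_iff) auto
    ultimately show ?thesis by (simp add: L_def)
  qed
  have LL4: "LL \<ge> 4"
  proof -
    have "log 2 (16::real) = 4"
    proof -
      have "log 2 ((2::real) ^ 4) = 4" by (subst log_nat_power) auto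
      moreover have "(2::real) ^ 4 = 16" by simp
      ultimately show ?thesis by simp
    qed
    moreover have "log 2 (16::real) \<le> log 2 L" using L16 by (subst log_le_cancel_iff) auto
    ultimately show ?thesis by (simp add: LL_def)
  qed
  have E: "E \<le> L + 1" "E \<ge> 0" using clog_real[OF n2] by (simp_all add: E_def L_def)
  have B: "B \<le> 4 + LL + real t" "B \<ge> 0"
  proof -
    have ge2: "6 * clog n + t \<ge> 2" using clog_min[OF n2] by simp
    have "B \<le> log 2 (real (6 * clog n + t)) + 1" using clog_real[OF ge2] by (simp add: B_def)
    also have "log 2 (real (6 * clog n + t)) \<le> log 2 (8 * L * real t)"
    proof -
      have "real (6 * clog n + t) = 6 * E + real t" by (simp add: E_def)
      also have "... \<le> 7 * L + real t" using E L16 by linarith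
      also have "... \<le> 8 * L * real t"
      proof -
        have "7 * L \<le> 7 * L * real t" using L16 t1 by (simp add: mult_le_cancel_left1)
        moreover have "real t \<le> L * real t" using L16 t1 by (simp add: mult_le_cancel_right1)
        ultimately show ?thesis by (simp add: algebra_simps)
      qed
      finally show ?thesis using ge2 by (subst log_le_cancel_iff) auto
    qed
    also have "log 2 (8 * L * real t) = 3 + LL + log 2 (real t)"
    proof -
      have "log 2 (8 * L * real t) = log 2 8 + log 2 L + log 2 (real t)"
        using L16 t1 by (simp add: log_mult)
      moreover have "log 2 (8::real) = 3"
      proof -
        have "log 2 ((2::real) ^ 3) = 3" by (subst log_nat_power) auto
        moreover have "(2::real) ^ 3 = 8" by simp
        ultimately show ?thesis by simp
      qed
      ultimately show ?thesis by (simp add: LL_def)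
    qed
    finally show "B \<le> 4 + LL + real t" using log2_le_self[OF t1] by linarith
    show "B \<ge> 0" by (simp add: B_def)
  qed
  have T: "real t \<ge> 1" using t1 by simp
  have rb1: "5 + E + (4 + E) * (2*B+7) \<le> 100 * real t * L * LL"
    by (rule real_bound(1)[OF L16 LL4 T E B])
  have rb2: "E * (4 * (2*B+7)) \<le> 100 * real t * L * LL"
    by (rule real_bound(2)[OF L16 LL4 T E B])
  obtain V s where V: "sip_for_bhh n t V" "space_bounded V s"
     "real s \<le> 5 + E + (4 + E) * (2 * B + 7)" "real (comm V) \<le> E * (4 * (2 * B + 7))"
    using sip_exists[OF t1 n2] unfolding E_def B_def by blast
  show "\<exists>V s. sip_for_bhh n t V \<and> space_bounded V s
              \<and> real s \<le> 100 * real t * log 2 (real n) * log 2 (log 2 (real n))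
              \<and> real (comm V) \<le> 100 * real t * log 2 (real n) * log 2 (log 2 (real n))"
    using V rb1 rb2 unfolding L_def LL_def by (intro exI[of _ V] exI[of _ s]) linarith
qed

end
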